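(* Let $c\in\operatorname{int}\Delta$ and let $\underline M$ be as defined below. Let $M>\underline M$ and let $x^M$ be a mutation equilibrium for $M$ (with respect to $c$). Then there is a unique function $\mathcal M:(\underline M,\infty)\to\Delta$ with $\mathcal M(M)=x^M$ such that $\mathcal M(m)$ is a mutation equilibrium for $m$ for every $m\in(\underline M,\infty)$ (unique among continuous such functions). Moreover $\mathcal M$ is continuously differentiable and $\mathcal M(m)\to c$ as $m\to\infty$.
   Context: Let $I=\{1,\dots,N\}$ be a finite set of populations; population $i$ has the finite type set $S_i=\{1,\dots,n_i\}$. Let $S=\{(i,h): i\in I, h\in S_i\}$, $\Delta_i=\{x_i\in\mathbb R^{n_i}_{\ge 0}:\sum_{h\le n_i}x_{ih}=1\}$, $\Delta=\prod_{i\in I}\Delta_i\subset\mathbb R^S$, and $\operatorname{int}\Delta=\{x\in\Delta: x_{ih}>0 \text{ for all }(i,h)\in S\}$. For each $(i,h)\in S$ let $f_{ih}\in C^1(U,\mathbb R)$ for some open $U\supset\Delta$, with $\partial f_{ih}/\partial x_{ik}=0$ for all $i\in I$, $h,k\in S_i$. Put $\bar f_i(x)=\sum_{h\le n_i}x_{ih}f_{ih}(x)$, $\phi_{ih}(x)=x_{ih}(f_{ih}(x)-\bar f_i(x))$, and for $M\ge0$, $c\in\operatorname{int}\Delta$, $\phi^M_{ih}(x)=\phi_{ih}(x)+M(c_{ih}-x_{ih})$. A mutation equilibrium for $M$ is $x\in\Delta$ with $\phi^M(x)=0$. Reduced system: for each $i$ substitute $x_{in_i}=1-\sum_{k<n_i}x_{ik}$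 and drop the equation for $x_{in_i}$, yielding $\tilde\phi,\tilde\phi^M$ with $D\tilde\phi^M=D\tilde\phi-M\,\mathrm{Id}$. Define $\underline M=\max\bigl(0,\sup\{\operatorname{Re}\lambda:\lambda\text{ eigenvalue of }D\tilde\phi(x),x\in\Delta\}\bigr)$. *)

theory Defs
  imports "HOL-Analysis.Analysis"
begin

text \<open>Points of R^S are
  represented as vectors over a finite index type 'k together with a bijection
  e : 'k -> S; the coordinate x_{ih} is x at the preimage of (i,h).\<close>

definition Sidx :: "nat \<Rightarrow> (nat \<Rightarrow> nat) \<Rightarrow> (nat \<times> nat) set" where
  "Sidx N n = {(i,h). i \<in> {1..N} \<and> h \<in> {1..n i}}"

definition co :: "('k \<Rightarrow> nat \<times> nat) \<Rightarrow> real^'k \<Rightarrow> nat \<Rightarrow> nat \<Rightarrow> real" where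
  "co e x i h = x $ (inv e (i,h))"

definition Simplex :: "nat \<Rightarrow> (nat \<Rightarrow> nat) \<Rightarrow> ('k \<Rightarrow> nat \<times> nat) \<Rightarrow> (real^'k) set" where
  "Simplex N n e = {x. (\<forall>(i,h)\<in>Sidx N n. co e x i h \<ge> 0) \<and>
                        (\<forall>i\<in>{1..N}. (\<Sum>h=1..n i. co e x i h) = 1)}"

definition intSimplex :: "nat \<Rightarrow> (nat \<Rightarrow> nat) \<Rightarrow> ('k \<Rightarrow> nat \<times> nat) \<Rightarrow> (real^'k) set" where
  "intSimplex N n e = {x \<in> Simplex N n e. \<forall>(i,h)\<in>Sidx N n. co e x i h > 0}"

definition C1_on :: "(real^'k \<Rightarrow> real) \<Rightarrow> (real^'k) set \<Rightarrow> bool" where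
  "C1_on f U \<longleftrightarrow> (\<exists>f'. (\<forall>x\<in>U. (f has_derivative blinfun_apply (f' x)) (at x)) \<and> continuous_on U f')"

definition partial_zero :: "('k \<Rightarrow> nat \<times> nat) \<Rightarrow> (real^'k \<Rightarrow> real) \<Rightarrow> nat \<Rightarrow> nat \<Rightarrow> real^'k \<Rightarrow> bool" where
  "partial_zero e g i k x \<longleftrightarrow>
     ((\<lambda>t. g (x + t *\<^sub>R axis (inv e (i,k)) 1)) has_real_derivative 0) (at 0)"

definition fbar :: "(nat \<Rightarrow> nat) \<Rightarrow> ('k \<Rightarrow> nat \<times> nat) \<Rightarrow> (nat \<Rightarrow> nat \<Rightarrow> real^'k \<Rightarrow> real)
                     \<Rightarrow> nat \<Rightarrow> real^'k \<Rightarrow> real" where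
  "fbar n e f i x = (\<Sum>h=1..n i. co e x i h * f i h x)"

definition phi :: "(nat \<Rightarrow> nat) \<Rightarrow> ('k \<Rightarrow> nat \<times> nat) \<Rightarrow> (nat \<Rightarrow> nat \<Rightarrow> real^'k \<Rightarrow> real)
                     \<Rightarrow> nat \<Rightarrow> nat \<Rightarrow> real^'k \<Rightarrow> real" where
  "phi n e f i h x = co e x i h * (f i h x - fbar n e f i x)"

definition phiM :: "(nat \<Rightarrow> nat) \<Rightarrow> ('k \<Rightarrow> nat \<times> nat) \<Rightarrow> (nat \<Rightarrow> nat \<Rightarrow> real^'k \<Rightarrow> real)
                     \<Rightarrow> real \<Rightarrow> real^'k \<Rightarrow> nat \<Rightarrow> nat \<Rightarrow> real^'k \<Rightarrow> real" where
  "phiM n e f M c i h x = phi n e f i h x + M * (co e c i h - co e x i h)"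

definition mut_eq :: "nat \<Rightarrow> (nat \<Rightarrow> nat) \<Rightarrow> ('k \<Rightarrow> nat \<times> nat) \<Rightarrow> (nat \<Rightarrow> nat \<Rightarrow> real^'k \<Rightarrow> real)
                     \<Rightarrow> real^'k \<Rightarrow> real \<Rightarrow> real^'k \<Rightarrow> bool" where
  "mut_eq N n e f c M x \<longleftrightarrow> x \<in> Simplex N n e \<and>
     (\<forall>(i,h)\<in>Sidx N n. phiM n e f M c i h x = 0)"

text \<open>Reduced system: the coordinates (i,h) with h < n i are free; the coordinate
  (i, n i) is replaced by 1 minus the sum of the others.\<close>
definition Red :: "nat \<Rightarrow> (nat \<Rightarrow> nat) \<Rightarrow> (nat \<times> nat) set" where
  "Red N n = {(i,h). i \<in> {1..N} \<and> h \<in> {1..<n i}}"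

definition lift :: "(nat \<Rightarrow> nat) \<Rightarrow> ('k \<Rightarrow> nat \<times> nat) \<Rightarrow> real^'k \<Rightarrow> real^'k" where
  "lift n e y = (\<chi> j. if snd (e j) = n (fst (e j))
                        then 1 - (\<Sum>k=1..<n (fst (e j)). co e y (fst (e j)) k)
                        else y $ j)"

text \<open>Entry ((i,h),(j,k)) of the Jacobian D phi-tilde at x: partial derivative of
  phi-tilde_{ih} with respect to the reduced variable x_{jk}.\<close>
definition redJac :: "(nat \<Rightarrow> nat) \<Rightarrow> ('k \<Rightarrow> nat \<times> nat) \<Rightarrow> (nat \<Rightarrow> nat \<Rightarrow> real^'k \<Rightarrow> real)
                     \<Rightarrow> real^'k \<Rightarrow> nat \<times> nat \<Rightarrow> nat \<times> nat \<Rightarrow> real" where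
  "redJac n e f x ih jk =
     deriv (\<lambda>t. phi n e f (fst ih) (snd ih) (lift n e (x + t *\<^sub>R axis (inv e jk) 1))) 0"

definition is_eig :: "(nat \<times> nat) set \<Rightarrow> (nat \<times> nat \<Rightarrow> nat \<times> nat \<Rightarrow> real) \<Rightarrow> complex \<Rightarrow> bool" where
  "is_eig R A lam \<longleftrightarrow> (\<exists>v :: nat \<times> nat \<Rightarrow> complex. (\<exists>p\<in>R. v p \<noteq> 0) \<and>
      (\<forall>p\<in>R. (\<Sum>q\<in>R. complex_of_real (A p q) * v q) = lam * v p))"

text \<open>M-underline = max(0, sup of real parts of eigenvalues of D phi-tilde(x), x in Delta),
  with the sup taken in the extended reals (sup of the empty set is -infinity).\<close>
definition Mlow :: "nat \<Rightarrow> (nat \<Rightarrow> nat) \<Rightarrow> ('k \<Rightarrow> nat \<times> nat) \<Rightarrow> (nat \<Rightarrow> nat \<Rightarrow> real^'k \<Rightarrow> real) \<Rightarrow> ereal" where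
  "Mlow N n e f = max 0 (Sup {ereal (Re lam) | lam x. x \<in> Simplex N n e \<and> is_eig (Red N n) (redJac n e f x) lam})"

end

theory Submission
  imports Defs
begin

lemma has_derivative_vec_lambda_gen:
  fixes g :: "'k::finite \<Rightarrow> 'a::real_normed_vector \<Rightarrow> real"
  assumes "\<And>j. (g j has_derivative g' j) F"
  shows "((\<lambda>x. \<chi> j. g j x) has_derivative (\<lambda>v. \<chi> j. g' j v)) F"
proof -
  have eq1: "(\<lambda>x. \<chi> j. g j x) = (\<lambda>x. \<Sum>j\<in>UNIV. g j x *\<^sub>R axis j 1)"
    by (auto simp: vec_eq_iff axis_def if_distrib cong: if_cong)
  have eq2: "(\<lambda>v. \<chi> j. g' j v) = (\<lambda>v. \<Sum>j\<in>UNIV. g' j v *\<^sub>R axis j 1)"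
    by (auto simp: vec_eq_iff axis_def if_distrib cong: if_cong)
  show ?thesis unfolding eq1 eq2
    by (intro has_derivative_sum has_derivative_scaleR_left assms)
qed

locale setting =
  fixes N :: nat and n :: "nat \<Rightarrow> nat" and e :: "'k::finite \<Rightarrow> nat \<times> nat"
    and f :: "nat \<Rightarrow> nat \<Rightarrow> real^'k \<Rightarrow> real" and U :: "(real^'k) set"
    and c :: "real^'k"
  assumes bij: "bij_betw e UNIV (Sidx N n)"
    and openU: "open U" and SU: "Simplex N n e \<subseteq> U"
    and C1: "\<forall>(i,h)\<in>Sidx N n. C1_on (f i h) U"
    and cint: "c \<in> intSimplex N n e"
begin

lemma inj_e: "inj e" using bij_betw_imp_inj_on[OF bij] .
lemma range_e: "range e = Sidx N n" using bij_betw_imp_surj_on[OF bij] .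
lemma e_Sidx: "e j \<in> Sidx N n" using range_e by blast
lemma inv_e_e[simp]: "inv e (e j) = j" using inj_e by simp
lemma e_inv_e: "p \<in> Sidx N n \<Longrightarrow> e (inv e p) = p"
  using range_e by (metis f_inv_into_f)
lemma co_ej[simp]: "co e x (fst (e j)) (snd (e j)) = x $ j"
  by (simp add: co_def)
lemma Sidx_iff: "(i,h) \<in> Sidx N n \<longleftrightarrow> 1 \<le> i \<and> i \<le> N \<and> 1 \<le> h \<and> h \<le> n i"
  by (auto simp: Sidx_def)
lemma ej_bounds: "1 \<le> fst (e j)" "fst (e j) \<le> N" "1 \<le> snd (e j)" "snd (e j) \<le> n (fst (e j))"
  using e_Sidx[of j] by (auto simp: Sidx_def)

lemma c_simp: "c \<in> Simplex N n e" using cint by (simp add: intSimplex_def)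
lemma c_sum: "i \<in> {1..N} \<Longrightarrow> (\<Sum>h=1..n i. co e c i h) = 1"
  using c_simp by (simp add: Simplex_def)
lemma n_pos: "i \<in> {1..N} \<Longrightarrow> 1 \<le> n i"
  using c_sum[of i] by (cases "n i") auto
lemma c_pos: "0 < c $ j"
proof -
  have "\<forall>p\<in>Sidx N n. 0 < co e c (fst p) (snd p)"
    using cint unfolding intSimplex_def by auto
  then have "0 < co e c (fst (e j)) (snd (e j))" using e_Sidx[of j] by blast
  then show ?thesis by simp
qed

lemma Simplex_iff: "x \<in> Simplex N n e \<longleftrightarrow> (\<forall>j. 0 \<le> x $ j) \<and> (\<forall>i\<in>{1..N}. (\<Sum>h=1..n i. co e x i h) = 1)"
proof -
  have 1: "(\<forall>p\<in>Sidx N n. co e x (fst p) (snd p) \<ge> 0) \<longleftrightarrow> (\<forall>j. 0 \<le> x $ j)"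
  proof
    assume a: "\<forall>p\<in>Sidx N n. co e x (fst p) (snd p) \<ge> 0"
    show "\<forall>j. 0 \<le> x $ j"
    proof
      fix j have "0 \<le> co e x (fst (e j)) (snd (e j))" using a e_Sidx[of j] by blast
      then show "0 \<le> x $ j" by simp
    qed
  next
    assume a: "\<forall>j. 0 \<le> x $ j"
    show "\<forall>p\<in>Sidx N n. co e x (fst p) (snd p) \<ge> 0" using a by (simp add: co_def)
  qed
  have 2: "(\<forall>(i,h)\<in>Sidx N n. co e x i h \<ge> 0) \<longleftrightarrow> (\<forall>p\<in>Sidx N n. co e x (fst p) (snd p) \<ge> 0)"
    by (simp add: case_prod_beta)
  show ?thesis unfolding Simplex_def mem_Collect_eq 2 1 ..
qed

definition fd where "fd i h = (SOME f'. (\<forall>x\<in>U. (f i h has_derivative blinfun_apply (f' x)) (at x)) \<and> continuous_on U f')"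

lemma fd_conj: assumes "(i,h) \<in> Sidx N n"
  shows "(\<forall>x\<in>U. (f i h has_derivative blinfun_apply (fd i h x)) (at x)) \<and> continuous_on U (fd i h)"
proof -
  have "C1_on (f i h) U" using C1 assms by blast
  then have "\<exists>f'. (\<forall>x\<in>U. (f i h has_derivative blinfun_apply (f' x)) (at x)) \<and> continuous_on U f'"
    by (simp add: C1_on_def)
  from someI_ex[OF this] show ?thesis unfolding fd_def .
qed

lemma fd: "(i,h) \<in> Sidx N n \<Longrightarrow> x \<in> U \<Longrightarrow> (f i h has_derivative blinfun_apply (fd i h x)) (at x)"
  using fd_conj by blast
lemma fd_cont: "(i,h) \<in> Sidx N n \<Longrightarrow> continuous_on U (fd i h)"
  using fd_conj by blast

lemma f_cont: "(i,h) \<in> Sidx N n \<Longrightarrow> continuous_on U (f i h)"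
  by (rule has_derivative_continuous_on, rule has_derivative_at_withinI, erule fd)

end

context setting begin

definition phid :: "nat \<Rightarrow> nat \<Rightarrow> real^'k \<Rightarrow> real^'k \<Rightarrow> real" where
  "phid i h x v = co e v i h * (f i h x - fbar n e f i x) +
     co e x i h * (fd i h x v - (\<Sum>h'=1..n i. co e v i h' * f i h' x + co e x i h' * fd i h' x v))"

lemma co_deriv: "((\<lambda>x. co e x i h) has_derivative (\<lambda>v. co e v i h)) F"
  unfolding co_def by (rule bounded_linear.has_derivative[OF bounded_linear_vec_nth has_derivative_ident])

lemma phi_deriv: assumes "(i,h) \<in> Sidx N n" "x \<in> U"
  shows "(phi n e f i h has_derivative phid i h x) (at x)"
proof -
  have Si: "h' \<in> {1..n i} \<Longrightarrow> (i,h') \<in> Sidx N n" for h' using assms(1) by (auto simp: Sidx_def)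
  have fb: "((\<lambda>x. fbar n e f i x) has_derivative
     (\<lambda>v. \<Sum>h'=1..n i. co e v i h' * f i h' x + co e x i h' * fd i h' x v)) (at x)"
    unfolding fbar_def
    apply (rule has_derivative_sum)
    apply (rule has_derivative_eq_rhs)
     apply (rule has_derivative_mult[OF co_deriv fd[OF Si assms(2)]])
     apply assumption
    apply (auto simp: algebra_simps)
    done
  show ?thesis
    unfolding phi_def[abs_def] phid_def[abs_def]
    apply (rule has_derivative_eq_rhs)
     apply (rule has_derivative_mult[OF co_deriv has_derivative_diff[OF fd[OF assms] fb]])
    apply (auto simp: algebra_simps)
    done
qed

lemma phid_cont: assumes "(i,h) \<in> Sidx N n"
  shows "continuous_on U (\<lambda>x. phid i h x v)"
proof -
  have Si: "h' \<in> {1..n i} \<Longrightarrow> (i,h') \<in> Sidx N n" for h' using assms(1) by (auto simp: Sidx_def)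
  have fc: "h' \<in> {1..n i} \<Longrightarrow> continuous_on U (f i h')" for h' using f_cont Si by blast
  have fdc: "h' \<in> {1..n i} \<Longrightarrow> continuous_on U (\<lambda>x. fd i h' x v)" for h'
    using fd_cont[OF Si] by (intro continuous_intros) auto
  have hin: "h \<in> {1..n i}" using assms by (auto simp: Sidx_def)
  show ?thesis unfolding phid_def fbar_def co_def
    by (intro continuous_intros fc fdc hin) auto
qed

definition P :: "real^'k \<Rightarrow> real^'k" where
  "P x = (\<chi> j. phi n e f (fst (e j)) (snd (e j)) x)"
definition Pd :: "real^'k \<Rightarrow> real^'k \<Rightarrow> real^'k" where
  "Pd x v = (\<chi> j. phid (fst (e j)) (snd (e j)) x v)"

lemma P_deriv: "x \<in> U \<Longrightarrow> (P has_derivative Pd x) (at x)"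
  unfolding P_def[abs_def] Pd_def[abs_def]
  by (rule has_derivative_vec_lambda_gen, rule phi_deriv) (auto simp: e_Sidx)

lemma Pd_cont: "continuous_on U (\<lambda>x. Pd x v)"
  unfolding Pd_def
  by (intro continuous_on_vec_lambda phid_cont) (simp add: e_Sidx)

lemma P_cont: "continuous_on U P"
  by (rule has_derivative_continuous_on, rule has_derivative_at_withinI, erule P_deriv)

end

context setting begin

definition lastk :: "'k \<Rightarrow> bool" where "lastk j \<longleftrightarrow> snd (e j) = n (fst (e j))"

definition F :: "real \<Rightarrow> real^'k \<Rightarrow> real^'k" where "F m x = P x + m *\<^sub>R (c - x)"

definition Phi :: "real \<Rightarrow> real^'k \<Rightarrow> real^'k" where
  "Phi m x = (\<chi> j. if lastk j then (\<Sum>h=1..n (fst (e j)). co e x (fst (e j)) h) - 1 else F m x $ j)"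

definition Psi :: "real \<times> (real^'k) \<Rightarrow> real \<times> (real^'k)" where
  "Psi z = (fst z, Phi (fst z) (snd z))"

definition Psid :: "real \<times> (real^'k) \<Rightarrow> real \<times> (real^'k) \<Rightarrow> real \<times> (real^'k)" where
  "Psid z w = (fst w, \<chi> j. if lastk j then (\<Sum>h=1..n (fst (e j)). co e (snd w) (fst (e j)) h)
      else Pd (snd z) (snd w) $ j + fst w * (c $ j - snd z $ j) - fst z * snd w $ j)"

lemma co_deriv2: "(g has_derivative g') F' \<Longrightarrow> ((\<lambda>x. co e (g x) i h) has_derivative (\<lambda>v. co e (g' v) i h)) F'"
  unfolding co_def by (rule bounded_linear.has_derivative[OF bounded_linear_vec_nth])

lemma Psi_deriv: assumes "snd z \<in> U" shows "(Psi has_derivative Psid z) (at z)"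
proof -
  have PS: "((\<lambda>z. P (snd z)) has_derivative (\<lambda>w. Pd (snd z) (snd w))) (at z)"
    using diff_chain_at[OF has_derivative_snd[OF has_derivative_ident] P_deriv[OF assms]] by (simp add: o_def)
  have cd: "((\<lambda>x. co e (snd x) i h) has_derivative (\<lambda>z. co e (snd z) i h)) (at z)" for i h
    unfolding co_def
    by (rule bounded_linear.has_derivative[OF bounded_linear_vec_nth], rule has_derivative_snd, rule has_derivative_ident)
  have comp: "((\<lambda>z. if lastk j then (\<Sum>h=1..n (fst (e j)). co e (snd z) (fst (e j)) h) - 1 else F (fst z) (snd z) $ j)
     has_derivative (\<lambda>w. if lastk j then (\<Sum>h=1..n (fst (e j)). co e (snd w) (fst (e j)) h)
      else Pd (snd z) (snd w) $ j + fst w * (c $ j - snd z $ j) - fst z * snd w $ j)) (at z)" for j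
  proof (cases "lastk j")
    case True
    have "((\<lambda>z. (\<Sum>h=1..n (fst (e j)). co e (snd z) (fst (e j)) h) - 1) has_derivative
       (\<lambda>w. (\<Sum>h=1..n (fst (e j)). co e (snd w) (fst (e j)) h))) (at z)"
      by (intro derivative_eq_intros) (auto intro: cd)
    then show ?thesis using True by simp
  next
    case False
    have PSj: "((\<lambda>x. P (snd x) $ j) has_derivative (\<lambda>za. Pd (snd z) (snd za) $ j)) (at z)"
      by (rule bounded_linear.has_derivative[OF bounded_linear_vec_nth PS])
    have sj: "((\<lambda>x. snd x $ j) has_derivative (\<lambda>h. snd h $ j)) (at z)"
      by (rule bounded_linear.has_derivative[OF bounded_linear_vec_nth], rule has_derivative_snd, rule has_derivative_ident)
    have "((\<lambda>z. P (snd z) $ j + fst z * (c $ j - snd z $ j)) has_derivative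
       (\<lambda>w. Pd (snd z) (snd w) $ j + (fst z * (0 - snd w $ j) + fst w * (c $ j - snd z $ j)))) (at z)"
      by (intro derivative_eq_intros) (auto intro: PSj sj)
    then show ?thesis using False unfolding F_def
      by (simp add: algebra_simps)
  qed
  show ?thesis unfolding Psi_def[abs_def] Psid_def[abs_def] Phi_def
    by (intro has_derivative_Pair has_derivative_fst has_derivative_ident
        has_derivative_vec_lambda_gen comp)
qed

lemma Psid_bl: "snd z \<in> U \<Longrightarrow> bounded_linear (Psid z)"
  using Psi_deriv has_derivative_bounded_linear by blast

definition Psi' where "Psi' z = Blinfun (Psid z)"

lemma Psi'_apply: "snd z \<in> U \<Longrightarrow> blinfun_apply (Psi' z) = Psid z"
  unfolding Psi'_def by (rule bounded_linear_Blinfun_apply[OF Psid_bl])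

lemma Psi_deriv': "snd z \<in> U \<Longrightarrow> (Psi has_derivative blinfun_apply (Psi' z)) (at z)"
  by (simp add: Psi'_apply Psi_deriv)

lemma Psi'_cont: "continuous_on (UNIV \<times> U) Psi'"
proof (rule continuous_on_blinfun_componentwise)
  fix b :: "real \<times> (real^'k)"
  have "continuous_on (UNIV \<times> U) (\<lambda>z. Psid z b)"
    unfolding Psid_def
  proof (intro continuous_intros continuous_on_vec_lambda)
    fix j
    have PdC: "continuous_on (UNIV \<times> U) (\<lambda>z. Pd (snd z) (snd b) $ j)"
      by (intro continuous_intros continuous_on_compose2[OF Pd_cont continuous_on_snd]) auto
    show "continuous_on (UNIV \<times> U) (\<lambda>z. if lastk j then (\<Sum>h=1..n (fst (e j)). co e (snd b) (fst (e j)) h)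
      else Pd (snd z) (snd b) $ j + fst b * (c $ j - snd z $ j) - fst z * snd b $ j)"
      by (cases "lastk j") (auto intro!: continuous_intros PdC)
  qed
  then show "continuous_on (UNIV \<times> U) (\<lambda>z. blinfun_apply (Psi' z) b)"
    by (rule continuous_on_eq) (auto simp: Psi'_apply)
qed

lemma Psi_cont: "continuous_on (UNIV \<times> U) Psi"
  by (rule has_derivative_continuous_on, rule has_derivative_at_withinI, rule Psi_deriv) auto

end

context setting begin

definition eq :: "real \<Rightarrow> real^'k \<Rightarrow> bool" where "eq m x \<longleftrightarrow> x \<in> Simplex N n e \<and> F m x = 0"

lemma F_phiM: "F m x $ j = phiM n e f m c (fst (e j)) (snd (e j)) x"
  by (simp add: F_def P_def phiM_def)

lemma F_at: "(i,h) \<in> Sidx N n \<Longrightarrow> F m x $ inv e (i,h) = phiM n e f m c i h x"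
  using F_phiM[of m x "inv e (i,h)"] e_inv_e[of "(i,h)"] by simp

lemma all_Sidx: "(\<forall>p\<in>Sidx N n. Q p) \<longleftrightarrow> (\<forall>j. Q (e j))"
proof
  assume "\<forall>p\<in>Sidx N n. Q p" then show "\<forall>j. Q (e j)" using e_Sidx by blast
next
  assume a: "\<forall>j. Q (e j)"
  show "\<forall>p\<in>Sidx N n. Q p"
  proof
    fix p assume "p \<in> Sidx N n"
    then have "p = e (inv e p)" using e_inv_e by simp
    then show "Q p" using a by metis
  qed
qed

lemma fst_e_in: "fst (e j) \<in> {1..N}" using ej_bounds by simp

lemma mut_eq_iff: "mut_eq N n e f c m x \<longleftrightarrow> eq m x"
proof -
  have "(\<forall>(i,h)\<in>Sidx N n. phiM n e f m c i h x = 0) \<longleftrightarrow> (\<forall>p\<in>Sidx N n. phiM n e f m c (fst p) (snd p) x = 0)"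
    by (simp add: case_prod_beta)
  also have "\<dots> \<longleftrightarrow> (\<forall>j. F m x $ j = 0)" unfolding all_Sidx F_phiM ..
  also have "\<dots> \<longleftrightarrow> F m x = 0" by (simp add: vec_eq_iff)
  finally show ?thesis unfolding mut_eq_def eq_def by simp
qed

lemma sum_phiM: assumes "(\<Sum>h=1..n i. co e x i h) = 1" "i \<in> {1..N}"
  shows "(\<Sum>h=1..n i. phiM n e f m c i h x) = 0"
proof -
  have "(\<Sum>h=1..n i. phiM n e f m c i h x) =
     (\<Sum>h=1..n i. co e x i h * f i h x) - (\<Sum>h=1..n i. co e x i h) * fbar n e f i x
      + m * ((\<Sum>h=1..n i. co e c i h) - (\<Sum>h=1..n i. co e x i h))"
    unfolding phiM_def phi_def
    by (simp add: sum.distrib sum_subtractf sum_distrib_left sum_distrib_right algebra_simps)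
  also have "\<dots> = 0" using assms c_sum[OF assms(2)] by (simp add: fbar_def)
  finally show ?thesis .
qed

lemma eq_pos: assumes "0 < m" "eq m x" shows "0 < x $ j"
proof -
  have ge: "0 \<le> x $ j" using assms(2) by (simp add: eq_def Simplex_iff)
  have F0: "F m x $ j = 0" using assms(2) by (simp add: eq_def)
  show ?thesis
  proof (rule ccontr)
    assume "\<not> 0 < x $ j"
    then have x0: "x $ j = 0" using ge by simp
    have "F m x $ j = m * c $ j"
      by (simp add: F_def P_def phi_def x0)
    then show False using F0 assms(1) c_pos[of j] by simp
  qed
qed

lemma last_ex: "i \<in> {1..N} \<Longrightarrow> lastk (inv e (i, n i)) \<and> e (inv e (i, n i)) = (i, n i)"
proof -
  assume i: "i \<in> {1..N}"
  then have "(i, n i) \<in> Sidx N n" using n_pos[OF i] by (auto simp: Sidx_def)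
  then show ?thesis using e_inv_e by (simp add: lastk_def)
qed

lemma eq_Psi: assumes "eq m x" shows "Psi (m, x) = (m, 0)"
proof -
  have s: "(\<Sum>h=1..n (fst (e j)). co e x (fst (e j)) h) = 1" for j
    using assms fst_e_in[of j] by (simp add: eq_def Simplex_iff)
  have F0: "F m x = 0" using assms by (simp add: eq_def)
  show ?thesis using s by (simp add: Psi_def Phi_def vec_eq_iff F0)
qed

lemma Psi_eq: assumes "Psi (m', x) = (m, 0)" "\<forall>j. 0 \<le> x $ j"
  shows "m' = m" "eq m x"
proof -
  show mm: "m' = m" using assms(1) by (simp add: Psi_def)
  have Ph: "Phi m x = 0" using assms(1) mm by (simp add: Psi_def)
  have sums: "(\<Sum>h=1..n i. co e x i h) = 1" if i: "i \<in> {1..N}" for i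
  proof -
    have "Phi m x $ inv e (i, n i) = 0" using Ph by simp
    then show ?thesis using last_ex[OF i] by (simp add: Phi_def)
  qed
  have simp: "x \<in> Simplex N n e" using sums assms(2) by (simp add: Simplex_iff)
  have nl: "F m x $ j = 0" if "\<not> lastk j" for j
  proof -
    have "Phi m x $ j = 0" using Ph by simp
    then show ?thesis using that by (simp add: Phi_def)
  qed
  have all: "F m x $ j = 0" for j
  proof (cases "lastk j")
    case False then show ?thesis using nl by simp
  next
    case True
    define i where "i = fst (e j)"
    have i: "i \<in> {1..N}" using ej_bounds by (simp add: i_def)
    have ej: "e j = (i, n i)" using True by (simp add: lastk_def i_def prod_eq_iff)
    have ni: "1 \<le> n i" using n_pos[OF i] .
    have "(\<Sum>h=1..n i. phiM n e f m c i h x) = 0" using sum_phiM[OF sums[OF i] i] .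
    moreover have "{1..n i} = insert (n i) {1..<n i}" using ni by auto
    ultimately have "phiM n e f m c i (n i) x + (\<Sum>h\<in>{1..<n i}. phiM n e f m c i h x) = 0"
      by simp
    moreover have "phiM n e f m c i h x = 0" if "h \<in> {1..<n i}" for h
    proof -
      have S: "(i,h) \<in> Sidx N n" using that i by (auto simp: Sidx_def)
      have "\<not> lastk (inv e (i,h))" using e_inv_e[OF S] that by (simp add: lastk_def)
      then show ?thesis using nl F_at[OF S] by metis
    qed
    ultimately have "phiM n e f m c i (n i) x = 0" by simp
    then show ?thesis using F_phiM[of m x j] ej by simp
  qed
  show "eq m x" using simp all by (simp add: eq_def vec_eq_iff)
qed

end

context setting begin

definition liftlin :: "real^'k \<Rightarrow> real^'k" where
  "liftlin y = (\<chi> j. if lastk j then - (\<Sum>k=1..<n (fst (e j)). co e y (fst (e j)) k) else y $ j)"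

lemma lift_eq: "lift n e y = liftlin y + (\<chi> j. if lastk j then 1 else 0)"
  by (simp add: lift_def liftlin_def lastk_def vec_eq_iff)

lemma liftlin_linear: "linear liftlin"
proof (rule linearI)
  fix x y :: "real^'k"
  show "liftlin (x + y) = liftlin x + liftlin y"
    by (simp add: liftlin_def vec_eq_iff co_def sum.distrib)
next
  fix r :: real and x :: "real^'k"
  show "liftlin (r *\<^sub>R x) = r *\<^sub>R liftlin x"
    by (simp add: liftlin_def vec_eq_iff co_def sum_distrib_left)
qed

lemma split_last: "1 \<le> n i \<Longrightarrow> (\<Sum>h=1..n i. g h) = g (n i) + (\<Sum>h=1..<n i. (g h :: real))"
proof -
  assume "1 \<le> n i"
  then have "{1..n i} = insert (n i) {1..<n i}" by auto
  then show ?thesis by simp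
qed

lemma lift_x: assumes "x \<in> Simplex N n e" shows "lift n e x = x"
proof -
  have "lift n e x $ j = x $ j" for j
  proof (cases "lastk j")
    case True
    define i where "i = fst (e j)"
    have i: "i \<in> {1..N}" unfolding i_def by (rule fst_e_in)
    have ej: "e j = (i, n i)" using True by (simp add: lastk_def i_def prod_eq_iff)
    have "(\<Sum>h=1..n i. co e x i h) = 1" using assms i by (simp add: Simplex_iff)
    then have "co e x i (n i) + (\<Sum>h=1..<n i. co e x i h) = 1" using split_last[OF n_pos[OF i]] by simp
    moreover have "co e x i (n i) = x $ j" using co_ej[of x j] ej by simp
    ultimately show ?thesis using True by (simp add: lift_def lastk_def i_def[symmetric] ej)
  next
    case False then show ?thesis by (simp add: lift_def lastk_def)
  qed
  then show ?thesis by (simp add: vec_eq_iff)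
qed

lemma lift_line: assumes "x \<in> Simplex N n e"
  shows "lift n e (x + t *\<^sub>R a) = x + t *\<^sub>R liftlin a"
proof -
  have "lift n e (x + t *\<^sub>R a) = liftlin x + t *\<^sub>R liftlin a + (\<chi> j. if lastk j then 1 else 0)"
    unfolding lift_eq using liftlin_linear by (simp add: linear_add linear_scale)
  also have "\<dots> = lift n e x + t *\<^sub>R liftlin a" unfolding lift_eq by simp
  finally show ?thesis using lift_x[OF assms] by simp
qed

lemma phid_linear: "(i,h) \<in> Sidx N n \<Longrightarrow> x \<in> U \<Longrightarrow> linear (phid i h x)"
  using phi_deriv has_derivative_linear by blast

lemma redJac_eq: assumes "p \<in> Sidx N n" "x \<in> Simplex N n e"
  shows "redJac n e f x p q = phid (fst p) (snd p) x (liftlin (axis (inv e q) (1::real)))"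
proof -
  define w where "w = liftlin (axis (inv e q) (1::real))"
  have xU: "x \<in> U" using assms SU by auto
  have pS: "(fst p, snd p) \<in> Sidx N n" using assms by simp
  have lin: "linear (phid (fst p) (snd p) x)" using phid_linear[OF pS xU] .
  have d1: "((\<lambda>t::real. x + t *\<^sub>R w) has_derivative (\<lambda>t. t *\<^sub>R w)) (at 0)"
    by (intro derivative_eq_intros) auto
  have d2: "(phi n e f (fst p) (snd p) has_derivative phid (fst p) (snd p) x) (at (x + 0 *\<^sub>R w))"
    using phi_deriv[OF pS xU] by simp
  have "((\<lambda>t. phi n e f (fst p) (snd p) (x + t *\<^sub>R w)) has_derivative
        (\<lambda>t. phid (fst p) (snd p) x (t *\<^sub>R w))) (at 0)"
    using diff_chain_at[OF d1 d2] by (simp add: o_def)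
  moreover have "(\<lambda>t. phid (fst p) (snd p) x (t *\<^sub>R w)) = (*) (phid (fst p) (snd p) x w)"
    using lin by (simp add: linear_scale mult.commute fun_eq_iff)
  ultimately have "((\<lambda>t. phi n e f (fst p) (snd p) (x + t *\<^sub>R w)) has_real_derivative phid (fst p) (snd p) x w) (at 0)"
    by (simp add: has_field_derivative_def mult.commute)
  then have "deriv (\<lambda>t. phi n e f (fst p) (snd p) (x + t *\<^sub>R w)) 0 = phid (fst p) (snd p) x w"
    by (rule DERIV_imp_deriv)
  moreover have "(\<lambda>t. phi n e f (fst p) (snd p) (lift n e (x + t *\<^sub>R axis (inv e q) (1::real)))) =
      (\<lambda>t. phi n e f (fst p) (snd p) (x + t *\<^sub>R w))"
    using lift_line[OF assms(2)] by (simp add: w_def)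
  ultimately show ?thesis by (simp add: redJac_def w_def)
qed

lemma Red_Sidx: "Red N n \<subseteq> Sidx N n" by (auto simp: Red_def Sidx_def)
lemma finite_Sidx: "finite (Sidx N n)" using range_e by (metis finite finite_imageI)
lemma finite_Red: "finite (Red N n)" using Red_Sidx finite_Sidx finite_subset by blast

lemma nonlast_Red: "\<not> lastk j \<longleftrightarrow> e j \<in> Red N n"
  using ej_bounds[of j] by (auto simp: lastk_def Red_def)

lemma liftlin_cong: assumes "\<And>j. \<not> lastk j \<Longrightarrow> u $ j = v $ j" shows "liftlin u = liftlin v"
proof -
  have "co e u i k = co e v i k" if "i = fst (e j)" "k \<in> {1..<n i}" for i k j
  proof -
    have S: "(i,k) \<in> Sidx N n" using that fst_e_in[of j] by (auto simp: Sidx_def)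
    have "\<not> lastk (inv e (i,k))" using e_inv_e[OF S] that by (simp add: lastk_def)
    then show ?thesis using assms by (simp add: co_def)
  qed
  then show ?thesis using assms by (auto simp: liftlin_def vec_eq_iff intro!: sum.cong)
qed

lemma liftlin_fix: assumes "\<And>i. i \<in> {1..N} \<Longrightarrow> (\<Sum>h=1..n i. co e v i h) = 0" shows "liftlin v = v"
proof -
  have "liftlin v $ j = v $ j" for j
  proof (cases "lastk j")
    case True
    define i where "i = fst (e j)"
    have i: "i \<in> {1..N}" unfolding i_def by (rule fst_e_in)
    have ej: "e j = (i, n i)" using True by (simp add: lastk_def i_def prod_eq_iff)
    have "co e v i (n i) + (\<Sum>h=1..<n i. co e v i h) = 0" using assms[OF i] split_last[OF n_pos[OF i]] by simp
    moreover have "co e v i (n i) = v $ j" using co_ej[of v j] ej by simp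
    ultimately show ?thesis using True by (simp add: liftlin_def i_def[symmetric])
  next
    case False then show ?thesis by (simp add: liftlin_def)
  qed
  then show ?thesis by (simp add: vec_eq_iff)
qed

lemma decomp: assumes "\<And>i. i \<in> {1..N} \<Longrightarrow> (\<Sum>h=1..n i. co e v i h) = 0"
  shows "v = (\<Sum>q\<in>Red N n. co e v (fst q) (snd q) *\<^sub>R liftlin (axis (inv e q) (1::real)))"
proof -
  define u where "u = (\<Sum>q\<in>Red N n. co e v (fst q) (snd q) *\<^sub>R axis (inv e q) (1::real))"
  have "u $ j = v $ j" if nl: "\<not> lastk j" for j
  proof -
    have ejR: "e j \<in> Red N n" using nl nonlast_Red by simp
    have "u $ j = (\<Sum>q\<in>Red N n. co e v (fst q) (snd q) * (axis (inv e q) (1::real) $ j))"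
      unfolding u_def by simp
    also have "\<dots> = (\<Sum>q\<in>Red N n. if q = e j then co e v (fst q) (snd q) else 0)"
    proof (rule sum.cong[OF refl])
      fix q assume q: "q \<in> Red N n"
      then have qS: "q \<in> Sidx N n" using Red_Sidx by auto
      have iff: "(inv e q = j) = (q = e j)" using e_inv_e[OF qS] by auto
      then show "co e v (fst q) (snd q) * (axis (inv e q) (1::real) $ j) = (if q = e j then co e v (fst q) (snd q) else 0)"
        unfolding axis_def using iff by auto
    qed
    also have "\<dots> = v $ j" using ejR finite_Red by simp
    finally show ?thesis .
  qed
  then have "liftlin u = liftlin v" by (rule liftlin_cong)
  also have "\<dots> = v" using liftlin_fix[OF assms] .
  finally have "v = liftlin u" by simp
  also have "\<dots> = (\<Sum>q\<in>Red N n. co e v (fst q) (snd q) *\<^sub>R liftlin (axis (inv e q) (1::real)))"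
    unfolding u_def using liftlin_linear by (simp add: linear_sum linear_scale)
  finally show ?thesis .
qed

end

context setting begin

lemma Psid_inj: assumes mM: "Mlow N n e f < ereal m" and x: "x \<in> Simplex N n e"
  shows "inj (Psid (m, x))"
proof -
  have xU: "x \<in> U" using x SU by auto
  have lin: "linear (Psid (m, x))" using Psid_bl[of "(m,x)"] xU bounded_linear.linear by auto
  show ?thesis unfolding linear_injective_0[OF lin]
  proof (intro allI impI)
    fix w assume w0: "Psid (m, x) w = 0"
    obtain dm v where w: "w = (dm, v)" by (cases w)
    have "fst (Psid (m, x) w) = 0" using w0 by simp
    then have dm: "dm = 0" using w by (simp add: Psid_def)
    have comp: "(if lastk j then (\<Sum>h=1..n (fst (e j)). co e v (fst (e j)) h)
      else Pd x v $ j + dm * (c $ j - x $ j) - m * v $ j) = 0" for j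
    proof -
      have "snd (Psid (m, x) (dm, v)) $ j = 0" using w0 w by simp
      then show ?thesis by (simp only: Psid_def snd_conv fst_conv vec_lambda_beta)
    qed
    have sums0: "(\<Sum>h=1..n i. co e v i h) = 0" if i: "i \<in> {1..N}" for i
      using comp[of "inv e (i, n i)"] last_ex[OF i] by simp
    have nl: "Pd x v $ j = m * v $ j" if "\<not> lastk j" for j
      using comp[of j] that dm by simp
    define u where "u q = co e v (fst q) (snd q)" for q
    define W where "W q = liftlin (axis (inv e q) (1::real))" for q
    have dec: "v = (\<Sum>q\<in>Red N n. u q *\<^sub>R W q)"
      using decomp[OF sums0] by (simp add: u_def W_def)
    have eig: "(\<Sum>q\<in>Red N n. redJac n e f x p q * u q) = m * u p" if p: "p \<in> Red N n" for p
    proof -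
      have pS: "p \<in> Sidx N n" using p Red_Sidx by auto
      define j where "j = inv e p"
      have ej: "e j = p" using e_inv_e[OF pS] by (simp add: j_def)
      have njl: "\<not> lastk j" using nonlast_Red ej p by simp
      have linp: "linear (phid (fst p) (snd p) x)" using phid_linear[of "fst p" "snd p" x] pS xU by simp
      have "(\<Sum>q\<in>Red N n. redJac n e f x p q * u q) = (\<Sum>q\<in>Red N n. u q * phid (fst p) (snd p) x (W q))"
        using redJac_eq[OF pS x] by (simp add: W_def mult.commute)
      also have "\<dots> = phid (fst p) (snd p) x (\<Sum>q\<in>Red N n. u q *\<^sub>R W q)"
        using linp by (simp add: linear_sum linear_scale)
      also have "\<dots> = phid (fst p) (snd p) x v" using dec by simp
      also have "\<dots> = Pd x v $ j" using ej by (simp add: Pd_def)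
      also have "\<dots> = m * v $ j" using nl[OF njl] .
      also have "\<dots> = m * u p" using co_ej[of v j] ej by (simp add: u_def)
      finally show ?thesis .
    qed
    have u0: "\<forall>p\<in>Red N n. u p = 0"
    proof (rule ccontr)
      assume "\<not> (\<forall>p\<in>Red N n. u p = 0)"
      then have ex: "\<exists>p\<in>Red N n. complex_of_real (u p) \<noteq> 0" by auto
      have ie: "is_eig (Red N n) (redJac n e f x) (complex_of_real m)"
        unfolding is_eig_def
      proof (intro exI[of _ "\<lambda>q. complex_of_real (u q)"] conjI ex ballI)
        fix p assume p: "p \<in> Red N n"
        have "(\<Sum>q\<in>Red N n. complex_of_real (redJac n e f x p q) * complex_of_real (u q))
           = complex_of_real (\<Sum>q\<in>Red N n. redJac n e f x p q * u q)" by simp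
        also have "\<dots> = complex_of_real m * complex_of_real (u p)" using eig[OF p] by simp
        finally show "(\<Sum>q\<in>Red N n. complex_of_real (redJac n e f x p q) * complex_of_real (u q))
           = complex_of_real m * complex_of_real (u p)" .
      qed
      have "ereal (Re (complex_of_real m)) \<in> {ereal (Re lam) | lam x. x \<in> Simplex N n e \<and> is_eig (Red N n) (redJac n e f x) lam}"
        by (rule CollectI, rule exI[of _ "complex_of_real m"], rule exI[of _ x]) (simp add: x ie)
      then have "ereal (Re (complex_of_real m)) \<le> Sup {ereal (Re lam) | lam x. x \<in> Simplex N n e \<and> is_eig (Red N n) (redJac n e f x) lam}"
        by (rule Sup_upper)
      then have "ereal m \<le> Sup {ereal (Re lam) | lam x. x \<in> Simplex N n e \<and> is_eig (Red N n) (redJac n e f x) lam}"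
        by simp
      then have "ereal m \<le> Mlow N n e f" unfolding Mlow_def by (simp add: le_max_iff_disj)
      then show False using mM by simp
    qed
    have "v = 0" using dec u0 by simp
    then show "w = 0" using w dm by (simp add: zero_prod_def)
  qed
qed

end

context setting begin

definition Opos :: "(real \<times> (real^'k)) set" where "Opos = UNIV \<times> (U \<inter> {x. \<forall>j. 0 < x $ j})"

lemma open_Opos: "open Opos"
proof -
  have "{x::real^'k. \<forall>j. 0 < x $ j} = (\<Inter>j. {x. 0 < x $ j})" by auto
  moreover have "open (\<Inter>j. {x::real^'k. 0 < x $ j})"
    by (intro open_INT finite open_Collect_less continuous_on_const linear_continuous_on[OF bounded_linear_vec_nth] ballI)
  ultimately show ?thesis unfolding Opos_def using openU by (simp add: open_Times open_Int)
qed

lemma local_ift: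
  assumes m0: "Mlow N n e f < ereal m0" and eqx: "eq m0 x0" and Ob: "open Ob" "(m0, x0) \<in> Ob"
  obtains U' V g g' where "open U'" "U' \<subseteq> Ob \<inter> Opos" "(m0, x0) \<in> U'" "open V" "(m0, 0) \<in> V"
    "homeomorphism U' V Psi g" "\<And>y. y \<in> V \<Longrightarrow> (g has_derivative g' y) (at y)"
proof -
  have xS: "x0 \<in> Simplex N n e" using eqx by (simp add: eq_def)
  have m0pos: "0 < m0"
  proof -
    have "0 \<le> Mlow N n e f" by (simp add: Mlow_def)
    then show ?thesis using m0 by (metis ereal_less_eq(6) less_le_trans zero_ereal_def ereal_less(2) less_imp_le not_le)
  qed
  have pos: "(m0, x0) \<in> Opos" using xS SU eq_pos[OF m0pos eqx] by (auto simp: Opos_def)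
  have inj: "inj (Psid (m0, x0))" by (rule Psid_inj[OF m0 xS])
  have lin: "linear (Psid (m0, x0))" using Psid_bl[of "(m0,x0)"] xS SU bounded_linear.linear by auto
  obtain h where hl: "linear h" and hf: "h \<circ> Psid (m0, x0) = id"
    using linear_injective_left_inverse[OF lin inj] by blast
  have hbl: "bounded_linear h" using hl linear_conv_bounded_linear by blast
  define invf where "invf = Blinfun h"
  have invf: "invf o\<^sub>L Psi' (m0, x0) = id_blinfun"
  proof (rule blinfun_eqI)
    fix y
    have "blinfun_apply (Psi' (m0, x0)) y = Psid (m0, x0) y" using Psi'_apply[of "(m0,x0)"] xS SU by auto
    then show "blinfun_apply (invf o\<^sub>L Psi' (m0, x0)) y = blinfun_apply id_blinfun y"
      using hf by (simp add: invf_def bounded_linear_Blinfun_apply[OF hbl] pointfree_idE)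
  qed
  have opn: "open (Ob \<inter> Opos)" using Ob open_Opos by auto
  have sub: "Ob \<inter> Opos \<subseteq> UNIV \<times> U" by (auto simp: Opos_def)
  have derf: "\<And>x. x \<in> Ob \<inter> Opos \<Longrightarrow> (Psi has_derivative blinfun_apply (Psi' x)) (at x)"
    using sub by (intro Psi_deriv') auto
  have contf: "continuous_on (Ob \<inter> Opos) Psi'" using Psi'_cont sub by (rule continuous_on_subset)
  have x0in: "(m0, x0) \<in> Ob \<inter> Opos" using Ob pos by auto
  have PsiX: "Psi (m0, x0) = (m0, 0)" by (rule eq_Psi[OF eqx])
  show ?thesis
  proof (rule inverse_function_theorem[OF opn derf contf x0in invf])
    fix U' V g g'
    assume a: "open U'" "U' \<subseteq> Ob \<inter> Opos" "(m0, x0) \<in> U'" "open V" "Psi (m0, x0) \<in> V"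
      "homeomorphism U' V Psi g" "\<And>y. y \<in> V \<Longrightarrow> (g has_derivative (g' y)) (at y)"
      "\<And>y. y \<in> V \<Longrightarrow> g' y = inv (blinfun_apply (Psi'(g y)))"
      "\<And>y. y \<in> V \<Longrightarrow> bij (blinfun_apply (Psi'(g y)))"
    show ?thesis using that[of U' V g g'] a(1-7) PsiX by simp
  qed
qed

end

context setting begin

lemma Mlow_ge0: "0 \<le> Mlow N n e f" by (simp add: Mlow_def)

lemma Ival_pos: "Mlow N n e f < ereal m \<Longrightarrow> 0 < m"
  using Mlow_ge0 by (metis ereal_less(2) le_less_trans zero_ereal_def ereal_less_real_iff less_ereal.simps(1))

lemma local_curve:
  assumes m0: "Mlow N n e f < ereal m0" and eqx: "eq m0 x0" and Ob: "open Ob" "(m0, x0) \<in> Ob"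
  shows "\<exists>U' \<delta> \<gamma> D. open U' \<and> U' \<subseteq> Ob \<and> (m0,x0) \<in> U' \<and> 0 < \<delta> \<and>
     (\<forall>m. \<bar>m - m0\<bar> < \<delta> \<longrightarrow> eq m (\<gamma> m) \<and> (m, \<gamma> m) \<in> U') \<and> \<gamma> m0 = x0 \<and>
     (\<gamma> has_vector_derivative D) (at m0) \<and>
     (\<forall>m x y. (m,x) \<in> U' \<and> (m,y) \<in> U' \<and> eq m x \<and> eq m y \<longrightarrow> x = y)"
proof -
  obtain U' V g g' where U': "open U'" "U' \<subseteq> Ob \<inter> Opos" "(m0, x0) \<in> U'" "open V" "(m0, 0) \<in> V"
    "homeomorphism U' V Psi g" "\<And>y. y \<in> V \<Longrightarrow> (g has_derivative g' y) (at y)"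
    using local_ift[OF m0 eqx Ob] by blast
  have gPsi: "\<And>z. z \<in> U' \<Longrightarrow> g (Psi z) = z" and Psig: "\<And>y. y \<in> V \<Longrightarrow> Psi (g y) = y"
    and gV: "g ` V = U'"
    using U'(6) by (auto simp: homeomorphism_def)
  obtain \<delta> where dpos: "0 < \<delta>" and dV: "ball (m0, 0) \<delta> \<subseteq> V"
    using U'(4,5) open_contains_ball by blast
  define \<gamma> where "\<gamma> m = snd (g (m, 0))" for m
  have loc: "eq m (\<gamma> m) \<and> (m, \<gamma> m) \<in> U'" if "\<bar>m - m0\<bar> < \<delta>" for m
  proof -
    have "(m, 0) \<in> ball (m0, 0) \<delta>" using that by (simp add: dist_Pair_Pair dist_real_def dist_commute)
    then have mV: "(m, 0) \<in> V" using dV by auto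
    define z where "z = g (m, 0)"
    have zU: "z \<in> U'" using gV mV z_def by auto
    have Pz: "Psi (fst z, snd z) = (m, 0)" using Psig[OF mV] z_def by simp
    have posz: "\<forall>j. 0 \<le> snd z $ j" using zU U'(2) by (auto simp: Opos_def less_imp_le)
    have "fst z = m" "eq m (snd z)" using Psi_eq[OF Pz posz] by auto
    then show ?thesis using zU by (simp add: \<gamma>_def z_def[symmetric] prod_eq_iff) (metis prod.collapse)
  qed
  have g0: "\<gamma> m0 = x0"
    using gPsi[OF U'(3)] eq_Psi[OF eqx] by (simp add: \<gamma>_def)
  have dP: "((\<lambda>m::real. (m, 0::real^'k)) has_derivative (\<lambda>t. (t, 0))) (at m0)"
    by (intro derivative_eq_intros) auto
  have "((g \<circ> (\<lambda>m. (m, 0::real^'k))) has_derivative (g' (m0, 0) \<circ> (\<lambda>t. (t, 0)))) (at m0)"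
    by (rule diff_chain_at[OF dP]) (use U'(7)[OF U'(5)] in simp)
  then have dg: "(\<gamma> has_derivative (\<lambda>t. snd (g' (m0, 0) (t, 0)))) (at m0)"
    unfolding \<gamma>_def[abs_def] by (auto dest: has_derivative_snd simp: o_def)
  then have lin: "linear (\<lambda>t. snd (g' (m0, 0) (t, 0)))" using has_derivative_linear by blast
  have "(\<lambda>t. snd (g' (m0, 0) (t, 0))) = (\<lambda>t. t *\<^sub>R snd (g' (m0, 0) (1, 0)))"
  proof
    fix t :: real
    show "snd (g' (m0, 0) (t, 0)) = t *\<^sub>R snd (g' (m0, 0) (1, 0))"
      using linear_scale[OF lin, of t 1] by simp
  qed
  then have vd: "(\<gamma> has_vector_derivative snd (g' (m0, 0) (1, 0))) (at m0)"
    using dg by (simp add: has_vector_derivative_def)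
  have uniq: "x = y" if "(m,x) \<in> U'" "(m,y) \<in> U'" "eq m x" "eq m y" for m x y
  proof -
    have "(m, x) = g (Psi (m, x))" using gPsi that by simp
    also have "\<dots> = g (Psi (m, y))" using eq_Psi that by simp
    also have "\<dots> = (m, y)" using gPsi that by simp
    finally show ?thesis by simp
  qed
  show ?thesis
    by (rule exI[of _ U'], rule exI[of _ \<delta>], rule exI[of _ \<gamma>], rule exI[of _ "snd (g' (m0, 0) (1, 0))"])
       (use U' dpos loc g0 vd uniq in blast)
qed

end

context setting begin

lemma Simplex_closed: "closed (Simplex N n e)"
proof -
  have eq: "Simplex N n e = (\<Inter>j. {x. 0 \<le> x $ j}) \<inter> (\<Inter>i\<in>{1..N}. {x. (\<Sum>h=1..n i. x $ inv e (i,h)) = 1})"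
    by (auto simp: Simplex_iff co_def)
  have c1: "closed (\<Inter>j. {x::real^'k. 0 \<le> x $ j})"
    by (intro closed_INT ballI closed_Collect_le continuous_on_const linear_continuous_on[OF bounded_linear_vec_nth])
  have c2: "closed (\<Inter>i\<in>{1..N}. {x::real^'k. (\<Sum>h=1..n i. x $ inv e (i,h)) = 1})"
    by (intro closed_INT ballI closed_Collect_eq continuous_on_const continuous_on_sum
        linear_continuous_on[OF bounded_linear_vec_nth])
  show ?thesis unfolding eq using c1 c2 by (rule closed_Int)
qed

lemma Simplex_le1: assumes "x \<in> Simplex N n e" shows "x $ j \<le> 1"
proof -
  have i: "fst (e j) \<in> {1..N}" by (rule fst_e_in)
  have nn: "\<forall>h. 0 \<le> co e x (fst (e j)) h" using assms by (simp add: Simplex_iff co_def)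
  have hin: "snd (e j) \<in> {1..n (fst (e j))}" using ej_bounds by simp
  have "co e x (fst (e j)) (snd (e j)) \<le> (\<Sum>h=1..n (fst (e j)). co e x (fst (e j)) h)"
    by (rule member_le_sum[OF hin]) (use nn in auto)
  also have "\<dots> = 1" using assms i by (simp add: Simplex_iff)
  finally show ?thesis by simp
qed

lemma Simplex_compact: "compact (Simplex N n e)"
proof -
  have "Simplex N n e \<subseteq> cbox 0 (\<chi> j. 1)"
    using Simplex_le1 by (auto simp: mem_box_cart Simplex_iff)
  then have "bounded (Simplex N n e)" using bounded_cbox bounded_subset by blast
  then show ?thesis using Simplex_closed by (simp add: compact_eq_bounded_closed)
qed

lemma Simplex_convex: "convex (Simplex N n e)"
  unfolding convex_def
proof (intro ballI allI impI)
  fix x y :: "real^'k" and u v :: real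
  assume x: "x \<in> Simplex N n e" and y: "y \<in> Simplex N n e" and uv: "0 \<le> u" "0 \<le> v" "u + v = 1"
  have "0 \<le> (u *\<^sub>R x + v *\<^sub>R y) $ j" for j
    using x y uv by (simp add: Simplex_iff)
  moreover have "(\<Sum>h=1..n i. co e (u *\<^sub>R x + v *\<^sub>R y) i h) = 1" if i: "i \<in> {1..N}" for i
  proof -
    have "(\<Sum>h=1..n i. co e (u *\<^sub>R x + v *\<^sub>R y) i h) = u * (\<Sum>h=1..n i. co e x i h) + v * (\<Sum>h=1..n i. co e y i h)"
      by (simp add: co_def sum.distrib sum_distrib_left)
    also have "\<dots> = 1" using x y i uv by (simp add: Simplex_iff)
    finally show ?thesis .
  qed
  ultimately show "u *\<^sub>R x + v *\<^sub>R y \<in> Simplex N n e" by (simp add: Simplex_iff)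
qed

lemma Simplex_ne: "c \<in> Simplex N n e" by (rule c_simp)

lemma Fcont: "continuous_on (UNIV \<times> U) (\<lambda>z. F (fst z) (snd z))"
  unfolding F_def
  by (intro continuous_intros continuous_on_compose2[OF P_cont continuous_on_snd]) auto

definition Zset :: "real set \<Rightarrow> (real \<times> (real^'k)) set" where
  "Zset K = {z. fst z \<in> K \<and> eq (fst z) (snd z)}"

lemma Zset_compact: assumes "compact K" shows "compact (Zset K)"
proof -
  have eq: "Zset K = (K \<times> Simplex N n e) \<inter> (\<lambda>z. F (fst z) (snd z)) -` {0}"
    by (auto simp: Zset_def eq_def)
  have cl: "closed (K \<times> Simplex N n e)"
    using assms Simplex_compact by (simp add: closed_Times compact_imp_closed)
  have ct: "continuous_on (K \<times> Simplex N n e) (\<lambda>z. F (fst z) (snd z))"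
    by (rule continuous_on_subset[OF Fcont]) (use SU in auto)
  have "closed (Zset K)" unfolding eq by (rule continuous_closed_preimage[OF ct cl closed_singleton])
  moreover have "bounded (Zset K)"
  proof -
    have "bounded (K \<times> Simplex N n e)" using assms Simplex_compact
      by (simp add: bounded_Times compact_imp_bounded)
    then show ?thesis unfolding eq by (rule bounded_subset) auto
  qed
  ultimately show ?thesis by (simp add: compact_eq_bounded_closed)
qed

lemma proj_closed: assumes "compact K" "closed C" shows "closed (fst ` (Zset K \<inter> C))"
proof -
  have "compact (Zset K \<inter> C)" using Zset_compact[OF assms(1)] assms(2) by (rule compact_Int_closed)
  then have "compact (fst ` (Zset K \<inter> C))" by (intro compact_continuous_image continuous_intros)
  then show ?thesis by (rule compact_imp_closed)
qed

definition Pb :: "(real^'k) \<Rightarrow> ((real^'k) \<Rightarrow>\<^sub>L (real^'k))" where "Pb x = Blinfun (Pd x)"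

lemma Pb_apply: "x \<in> U \<Longrightarrow> blinfun_apply (Pb x) = Pd x"
  unfolding Pb_def using P_deriv has_derivative_bounded_linear bounded_linear_Blinfun_apply by blast

lemma Pb_cont: "continuous_on U Pb"
proof (rule continuous_on_blinfun_componentwise)
  fix b :: "real^'k"
  show "continuous_on U (\<lambda>x. blinfun_apply (Pb x) b)"
    using Pd_cont[of b] by (rule continuous_on_eq) (simp add: Pb_apply)
qed

lemma P_lipschitz: obtains B where "\<And>x y. x \<in> Simplex N n e \<Longrightarrow> y \<in> Simplex N n e \<Longrightarrow> norm (P x - P y) \<le> B * norm (x - y)"
proof -
  have "compact (Pb ` Simplex N n e)"
    using Simplex_compact Pb_cont SU by (intro compact_continuous_image) (auto intro: continuous_on_subset)
  then obtain B where B: "\<And>x. x \<in> Simplex N n e \<Longrightarrow> norm (Pb x) \<le> B"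
    using compact_imp_bounded bounded_iff by (metis image_eqI)
  have "norm (P x - P y) \<le> B * norm (x - y)" if "x \<in> Simplex N n e" "y \<in> Simplex N n e" for x y
  proof (rule differentiable_bound[OF Simplex_convex _ _ that])
    fix z assume z: "z \<in> Simplex N n e"
    then have zU: "z \<in> U" using SU by auto
    show "(P has_derivative Pd z) (at z within Simplex N n e)"
      using P_deriv[OF zU] by (rule has_derivative_at_withinI)
    show "onorm (Pd z) \<le> B" using B[OF z] Pb_apply[OF zU] by (simp add: norm_blinfun.rep_eq)
  qed
  then show ?thesis using that by blast
qed

lemma P_bounded: obtains K where "\<And>x. x \<in> Simplex N n e \<Longrightarrow> norm (P x) \<le> K"
proof -
  have "compact (P ` Simplex N n e)"
    using Simplex_compact P_cont SU by (intro compact_continuous_image) (auto intro: continuous_on_subset)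
  then show ?thesis using that compact_imp_bounded bounded_iff by (metis image_eqI)
qed

lemma eq_P: "eq m x \<Longrightarrow> P x = m *\<^sub>R (x - c)"
  by (simp add: eq_def F_def algebra_simps)

end

lemma clopen_real:
  fixes S T :: "real set"
  assumes conn: "connected S" and sub: "T \<subseteq> S" and ne: "T \<noteq> {}"
    and op: "\<And>x. x \<in> T \<Longrightarrow> \<exists>\<delta>>0. \<forall>y\<in>S. \<bar>y - x\<bar> < \<delta> \<longrightarrow> y \<in> T"
    and cl: "\<And>x. x \<in> S \<Longrightarrow> (\<And>\<delta>. \<delta> > 0 \<Longrightarrow> \<exists>y\<in>T. \<bar>y - x\<bar> < \<delta>) \<Longrightarrow> x \<in> T"
  shows "T = S"
proof -
  have o: "openin (top_of_set S) T"
    unfolding openin_euclidean_subtopology_iff using sub op by (auto simp: dist_real_def)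
  have "T = S \<inter> closure T"
  proof
    show "T \<subseteq> S \<inter> closure T" using sub closure_subset by auto
    show "S \<inter> closure T \<subseteq> T"
    proof
      fix x assume x: "x \<in> S \<inter> closure T"
      then have "\<forall>e>0. \<exists>y\<in>T. dist y x < e" using closure_approachable by blast
      then show "x \<in> T" using cl x by (auto simp: dist_real_def)
    qed
  qed
  then have c: "closedin (top_of_set S) T" unfolding closedin_closed by blast
  show ?thesis using conn o c ne unfolding connected_clopen by blast
qed

lemma ereal_interval_connected: "connected {m::real. a < ereal m}"
proof -
  have "is_interval {m::real. a < ereal m}" unfolding is_interval_1
    by (auto intro: less_le_trans)
  then show ?thesis by (rule is_interval_connected)
qed

lemma ereal_interval_open: "open {m::real. a < ereal m}"
proof (cases a)
  case (real r)
  then have "{m::real. a < ereal m} = {r<..}" by auto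
  then show ?thesis by simp
next
  case PInf then show ?thesis by simp
next
  case MInf then show ?thesis by simp
qed

context setting begin

definition Ival where "Ival = {m. Mlow N n e f < ereal m}"

lemma exist_all: assumes M: "M \<in> Ival" and xM: "eq M xM" shows "\<forall>m\<in>Ival. \<exists>x. eq m x"
proof -
  define T where "T = {m\<in>Ival. \<exists>x. eq m x}"
  have "T = Ival"
  proof (rule clopen_real)
    show "connected Ival" unfolding Ival_def by (rule ereal_interval_connected)
    show "T \<subseteq> Ival" by (auto simp: T_def)
    show "T \<noteq> {}" using M xM by (auto simp: T_def)
  next
    fix x assume "x \<in> T"
    then obtain x0 where x: "x \<in> Ival" "eq x x0" by (auto simp: T_def)
    obtain U' \<delta> \<gamma> D where "0 < \<delta>" "\<forall>m. \<bar>m - x\<bar> < \<delta> \<longrightarrow> eq m (\<gamma> m) \<and> (m, \<gamma> m) \<in> U'"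
      using local_curve[of x x0 UNIV] x by (auto simp: Ival_def)
    then show "\<exists>\<delta>>0. \<forall>y\<in>Ival. \<bar>y - x\<bar> < \<delta> \<longrightarrow> y \<in> T" by (auto simp: T_def)
  next
    fix x assume x: "x \<in> Ival" and appr: "\<And>\<delta>. \<delta> > 0 \<Longrightarrow> \<exists>y\<in>T. \<bar>y - x\<bar> < \<delta>"
    define K where "K = {x - 1..x + 1}"
    have cK: "closed (fst ` (Zset K \<inter> UNIV))" by (rule proj_closed) (auto simp: K_def)
    have "\<forall>e>0. \<exists>y\<in>fst ` (Zset K \<inter> UNIV). dist y x < e"
    proof (intro allI impI)
      fix e :: real assume "e > 0"
      then obtain y where y: "y \<in> T" "\<bar>y - x\<bar> < min e 1" using appr[of "min e 1"] by auto
      then obtain z where "eq y z" by (auto simp: T_def)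
      then have "(y, z) \<in> Zset K" using y by (auto simp: Zset_def K_def)
      then show "\<exists>y\<in>fst ` (Zset K \<inter> UNIV). dist y x < e" using y
        by (intro bexI[of _ y]) (auto simp: dist_real_def intro: image_eqI[of y fst "(y,z)"])
    qed
    then have "x \<in> fst ` (Zset K \<inter> UNIV)" using closed_approachable[OF cK] by blast
    then show "x \<in> T" using x by (auto simp: T_def Zset_def)
  qed
  then show ?thesis by (auto simp: T_def)
qed

end

context setting begin

lemma unique_large: obtains m1 where "\<And>m x y. m \<ge> m1 \<Longrightarrow> eq m x \<Longrightarrow> eq m y \<Longrightarrow> x = y"
proof -
  obtain B where B: "\<And>x y. x \<in> Simplex N n e \<Longrightarrow> y \<in> Simplex N n e \<Longrightarrow> norm (P x - P y) \<le> B * norm (x - y)"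
    using P_lipschitz by blast
  have "x = y" if m: "m \<ge> max B 0 + 1" and ex: "eq m x" and ey: "eq m y" for m x y
  proof (rule ccontr)
    assume ne: "x \<noteq> y"
    have "P x - P y = m *\<^sub>R (x - c) - m *\<^sub>R (y - c)" using eq_P[OF ex] eq_P[OF ey] by simp
    also have "\<dots> = m *\<^sub>R (x - y)" by (simp add: algebra_simps)
    finally have "P x - P y = m *\<^sub>R (x - y)" .
    then have "m * norm (x - y) \<le> B * norm (x - y)"
      using B[of x y] ex ey m by (simp add: eq_def)
    moreover have "norm (x - y) > 0" using ne by simp
    ultimately have "m \<le> B" by simp
    then show False using m by simp
  qed
  then show ?thesis using that by blast
qed

lemma unique_all: assumes M: "M \<in> Ival" and xM: "eq M xM"
  shows "\<forall>m\<in>Ival. \<forall>x y. eq m x \<longrightarrow> eq m y \<longrightarrow> x = y"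
proof -
  define T where "T = {m\<in>Ival. \<forall>x y. eq m x \<longrightarrow> eq m y \<longrightarrow> x = y}"
  obtain m1 where m1: "\<And>m x y. m \<ge> m1 \<Longrightarrow> eq m x \<Longrightarrow> eq m y \<Longrightarrow> x = y" using unique_large by blast
  have ex: "\<forall>m\<in>Ival. \<exists>x. eq m x" using exist_all[OF M xM] .
  have "T = Ival"
  proof (rule clopen_real)
    show "connected Ival" unfolding Ival_def by (rule ereal_interval_connected)
    show "T \<subseteq> Ival" by (auto simp: T_def)
    have "max M m1 \<in> Ival" using M by (auto simp: Ival_def intro: less_le_trans)
    then have "max M m1 \<in> T" using m1[of "max M m1"] by (auto simp: T_def)
    then show "T \<noteq> {}" by blast
  next
    fix x assume xT: "x \<in> T"
    then have xI: "x \<in> Ival" by (simp add: T_def)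
    then obtain x0 where x0: "eq x x0" using ex by blast
    obtain U' \<delta>0 \<gamma> D where U': "open U'" "(x, x0) \<in> U'"
      and uq: "\<forall>m a b. (m,a) \<in> U' \<and> (m,b) \<in> U' \<and> eq m a \<and> eq m b \<longrightarrow> a = b"
      using local_curve[of x x0 UNIV] xI x0 by (auto simp: Ival_def)
    define K where "K = {x - 1..x + 1}"
    define Pr where "Pr = fst ` (Zset K \<inter> (- U'))"
    have cPr: "closed Pr" unfolding Pr_def using U'(1) by (intro proj_closed) (auto simp: K_def)
    have xPr: "x \<notin> Pr"
    proof
      assume "x \<in> Pr"
      then obtain y where "(x, y) \<in> Zset K" "(x, y) \<notin> U'" by (auto simp: Pr_def)
      then have "eq x y" by (simp add: Zset_def)
      then have "y = x0" using xT x0 by (auto simp: T_def)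
      then show False using \<open>(x, y) \<notin> U'\<close> U'(2) by simp
    qed
    obtain \<epsilon> where eps: "\<epsilon> > 0" "ball x \<epsilon> \<subseteq> - Pr"
      using cPr xPr open_contains_ball[of "- Pr"] by (metis ComplI open_Compl)
    show "\<exists>\<delta>>0. \<forall>y\<in>Ival. \<bar>y - x\<bar> < \<delta> \<longrightarrow> y \<in> T"
    proof (intro exI[of _ "min \<epsilon> 1"] conjI ballI impI)
      show "0 < min \<epsilon> 1" using eps by simp
      fix y assume yI: "y \<in> Ival" and yd: "\<bar>y - x\<bar> < min \<epsilon> 1"
      have inU: "(y, a) \<in> U'" if "eq y a" for a
      proof (rule ccontr)
        assume "(y, a) \<notin> U'"
        moreover have "(y, a) \<in> Zset K" using that yd by (auto simp: Zset_def K_def)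
        ultimately have "y \<in> Pr" unfolding Pr_def by (auto intro: image_eqI[of y fst "(y,a)"])
        moreover have "y \<in> ball x \<epsilon>" using yd by (simp add: dist_real_def abs_minus_commute)
        ultimately show False using eps by auto
      qed
      show "y \<in> T" unfolding T_def
      proof (intro CollectI conjI yI allI impI)
        fix a b assume "eq y a" "eq y b"
        then show "a = b" using inU[of a] inU[of b] uq by blast
      qed
    qed
  next
    fix x assume xI: "x \<in> Ival" and appr: "\<And>\<delta>. \<delta> > 0 \<Longrightarrow> \<exists>y\<in>T. \<bar>y - x\<bar> < \<delta>"
    show "x \<in> T"
    proof (rule ccontr)
      assume "x \<notin> T"
      then obtain a b where ab: "eq x a" "eq x b" "a \<noteq> b" using xI by (auto simp: T_def)
      define d where "d = dist a b"
      have dpos: "d > 0" using ab by (simp add: d_def)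
      have xM: "Mlow N n e f < ereal x" using xI by (simp add: Ival_def)
      obtain U1 \<delta>1 \<gamma>1 D1 where U1: "U1 \<subseteq> ball (x, a) (d/2)" "0 < \<delta>1"
        "\<forall>m. \<bar>m - x\<bar> < \<delta>1 \<longrightarrow> eq m (\<gamma>1 m) \<and> (m, \<gamma>1 m) \<in> U1"
        using local_curve[OF xM ab(1), of "ball (x, a) (d/2)"] dpos by auto
      obtain U2 \<delta>2 \<gamma>2 D2 where U2: "U2 \<subseteq> ball (x, b) (d/2)" "0 < \<delta>2"
        "\<forall>m. \<bar>m - x\<bar> < \<delta>2 \<longrightarrow> eq m (\<gamma>2 m) \<and> (m, \<gamma>2 m) \<in> U2"
        using local_curve[OF xM ab(2), of "ball (x, b) (d/2)"] dpos by auto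
      obtain y where y: "y \<in> T" "\<bar>y - x\<bar> < min \<delta>1 \<delta>2" using appr[of "min \<delta>1 \<delta>2"] U1(2) U2(2) by auto
      have e1: "eq y (\<gamma>1 y)" "(y, \<gamma>1 y) \<in> ball (x, a) (d/2)" using U1 y by auto
      have e2: "eq y (\<gamma>2 y)" "(y, \<gamma>2 y) \<in> ball (x, b) (d/2)" using U2 y by auto
      have "\<gamma>1 y = \<gamma>2 y" using y(1) e1(1) e2(1) by (auto simp: T_def)
      moreover have "dist (x, a) (x, b) \<le> dist (x, a) (y, \<gamma>2 y) + dist (y, \<gamma>2 y) (x, b)"
        by (rule dist_triangle)
      ultimately have "dist (x, a) (x, b) < d"
        using e1(2) e2(2) by (simp add: dist_commute)
      moreover have "dist (x, a) (x, b) = d" by (simp add: dist_Pair_Pair d_def)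
      ultimately show False by simp
    qed
  qed
  then show ?thesis by (auto simp: T_def)
qed

end

lemma cont_solution:
  fixes T :: "'a::metric_space \<Rightarrow> ('b::euclidean_space \<Rightarrow>\<^sub>L 'b)" and y w :: "'a \<Rightarrow> 'b"
  assumes Tc: "continuous_on S T" and inj: "\<And>s. s \<in> S \<Longrightarrow> inj (blinfun_apply (T s))"
    and wc: "continuous_on S w" and eqs: "\<And>s. s \<in> S \<Longrightarrow> T s (y s) = w s"
  shows "continuous_on S y"
  unfolding continuous_on_def
proof
  fix a assume a: "a \<in> S"
  have lin: "linear (blinfun_apply (T a))" by (simp add: blinfun.bounded_linear_right bounded_linear.linear)
  obtain B where B: "B > 0" "\<And>u. B * norm u \<le> norm (T a u)"
    using linear_inj_bounded_below_pos[OF lin inj[OF a]] by blast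
  have Tl: "(T \<longlongrightarrow> T a) (at a within S)" using Tc a continuous_on_def by blast
  have wl: "(w \<longlongrightarrow> w a) (at a within S)" using wc a continuous_on_def by blast
  have ev1: "eventually (\<lambda>s. dist (T s) (T a) < B/2) (at a within S)" using tendstoD[OF Tl, of "B/2"] B by simp
  have ev2: "eventually (\<lambda>s. s \<in> S) (at a within S)" by (simp add: eventually_at_filter)
  have bound: "norm (y s - y a) \<le> (2/B) * (norm (w s - w a) + norm (T s - T a) * norm (y a))"
     if s: "s \<in> S" "dist (T s) (T a) < B/2" for s
  proof -
    define u where "u = y s - y a"
    have Tsu: "T s u = (w s - w a) - (T s - T a) (y a)"
      using eqs[OF s(1)] eqs[OF a] by (simp add: u_def blinfun.diff_right blinfun.diff_left)
    have e1: "T a u = T s u - (T s - T a) u" by (simp add: blinfun.diff_left)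
    have "norm (T a u) \<le> norm (T s u) + norm ((T s - T a) u)"
      unfolding e1 by (rule norm_triangle_ineq4)
    also have "\<dots> \<le> norm (T s u) + norm (T s - T a) * norm u"
      using norm_blinfun[of "T s - T a" u] by simp
    finally have "norm (T a u) \<le> norm (T s u) + norm (T s - T a) * norm u" .
    moreover have "norm (T s - T a) * norm u \<le> (B/2) * norm u"
      using s(2) by (intro mult_right_mono) (auto simp: dist_norm)
    ultimately have "B * norm u \<le> norm (T s u) + (B/2) * norm u" using B(2)[of u] by linarith
    then have "norm u \<le> (2/B) * norm (T s u)" using B(1) by (simp add: field_simps)
    moreover have "norm (T s u) \<le> norm (w s - w a) + norm (T s - T a) * norm (y a)"
      unfolding Tsu using norm_triangle_ineq4[of "w s - w a" "(T s - T a) (y a)"] norm_blinfun[of "T s - T a" "y a"]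
      by linarith
    moreover have "(2/B) * norm (T s u) \<le> (2/B) * (norm (w s - w a) + norm (T s - T a) * norm (y a))"
      using calculation(2) B(1) by (intro mult_left_mono) auto
    ultimately show ?thesis unfolding u_def by linarith
  qed
  have ev: "eventually (\<lambda>s. norm (y s - y a) \<le> (2/B) * (norm (w s - w a) + norm (T s - T a) * norm (y a))) (at a within S)"
    using eventually_conj[OF ev1 ev2] by eventually_elim (use bound in auto)
  have wz: "((\<lambda>s. norm (w s - w a)) \<longlongrightarrow> 0) (at a within S)"
    using tendsto_norm_zero[OF LIM_zero[OF wl]] .
  have Tz: "((\<lambda>s. norm (T s - T a)) \<longlongrightarrow> 0) (at a within S)"
    using tendsto_norm_zero[OF LIM_zero[OF Tl]] .
  have "((\<lambda>s. (2/B) * (norm (w s - w a) + norm (T s - T a) * norm (y a))) \<longlongrightarrow> (2/B) * (0 + 0 * norm (y a))) (at a within S)"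
    by (intro tendsto_intros wz Tz)
  then have "((\<lambda>s. (2/B) * (norm (w s - w a) + norm (T s - T a) * norm (y a))) \<longlongrightarrow> 0) (at a within S)" by simp
  then have "((\<lambda>s. y s - y a) \<longlongrightarrow> 0) (at a within S)" using Lim_null_comparison[OF ev] by blast
  then show "(y \<longlongrightarrow> y a) (at a within S)" by (rule LIM_zero_cancel)
qed

context setting begin

theorem main:
  assumes M: "Mlow N n e f < ereal M" and xM: "eq M xM"
  shows "\<exists>Mc. Mc M = xM \<and> (\<forall>m. Mlow N n e f < ereal m \<longrightarrow> eq m (Mc m)) \<and> continuous_on Ival Mc \<and>
     (\<forall>G. (\<forall>m. Mlow N n e f < ereal m \<longrightarrow> eq m (G m)) \<longrightarrow> (\<forall>m. Mlow N n e f < ereal m \<longrightarrow> G m = Mc m)) \<and>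
     Mc C1_differentiable_on Ival \<and> (Mc \<longlongrightarrow> c) at_top"
proof -
  have MI: "M \<in> Ival" using M by (simp add: Ival_def)
  have ex: "\<forall>m\<in>Ival. \<exists>x. eq m x" using exist_all[OF MI xM] .
  have un: "\<forall>m\<in>Ival. \<forall>x y. eq m x \<longrightarrow> eq m y \<longrightarrow> x = y" using unique_all[OF MI xM] .
  define Mc where "Mc m = (SOME x. eq m x)" for m
  have eqM: "eq m (Mc m)" if "m \<in> Ival" for m
    using ex that unfolding Mc_def by (metis someI_ex)
  have uniq: "x = Mc m" if "m \<in> Ival" "eq m x" for m x
    using un eqM that by blast
  have oI: "open Ival" unfolding Ival_def by (rule ereal_interval_open)
  have vd: "\<exists>D. (Mc has_vector_derivative D) (at m)" if mI: "m \<in> Ival" for m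
  proof -
    have mM: "Mlow N n e f < ereal m" using mI by (simp add: Ival_def)
    obtain U' \<delta> \<gamma> D where d: "0 < \<delta>" "\<forall>m'. \<bar>m' - m\<bar> < \<delta> \<longrightarrow> eq m' (\<gamma> m') \<and> (m', \<gamma> m') \<in> U'"
      "(\<gamma> has_vector_derivative D) (at m)"
      using local_curve[OF mM eqM[OF mI], of UNIV] by blast
    have "(Mc has_vector_derivative D) (at m)"
    proof (rule has_vector_derivative_transform_within_open[OF d(3), of "ball m \<delta> \<inter> Ival"])
      show "open (ball m \<delta> \<inter> Ival)" using oI by auto
      show "m \<in> ball m \<delta> \<inter> Ival" using d(1) mI by auto
      fix y assume "y \<in> ball m \<delta> \<inter> Ival"
      then have "\<bar>y - m\<bar> < \<delta>" "y \<in> Ival" by (auto simp: dist_real_def abs_minus_commute)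
      then show "\<gamma> y = Mc y" using d(2) uniq by blast
    qed
    then show ?thesis by blast
  qed
  define DD where "DD m = (SOME D. (Mc has_vector_derivative D) (at m))" for m
  have DD: "(Mc has_vector_derivative DD m) (at m)" if "m \<in> Ival" for m
    using vd[OF that] unfolding DD_def by (rule someI_ex)
  have Mcont: "continuous_on Ival Mc"
    by (rule continuous_at_imp_continuous_on) (use DD has_vector_derivative_continuous in blast)
  have MU: "Mc m \<in> U" if "m \<in> Ival" for m using eqM[OF that] SU by (auto simp: eq_def)
  have lineq: "Psid (m, Mc m) (1, DD m) = (1, 0)" if mI: "m \<in> Ival" for m
  proof -
    have dG: "((\<lambda>m'. (m', Mc m')) has_derivative (\<lambda>t. (t, t *\<^sub>R DD m))) (at m)"
      using DD[OF mI] by (intro has_derivative_Pair has_derivative_ident) (simp add: has_vector_derivative_def)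
    have dPsi: "(Psi has_derivative Psid (m, Mc m)) (at ((\<lambda>m'. (m', Mc m')) m))"
      using Psi_deriv[of "(m, Mc m)"] MU[OF mI] by simp
    have "((Psi \<circ> (\<lambda>m'. (m', Mc m'))) has_derivative (Psid (m, Mc m) \<circ> (\<lambda>t. (t, t *\<^sub>R DD m)))) (at m)"
      by (rule diff_chain_at[OF dG dPsi])
    moreover have same: "\<And>y. y \<in> Ival \<Longrightarrow> (Psi \<circ> (\<lambda>m'. (m', Mc m'))) y = (\<lambda>m'. (m', 0::real^'k)) y"
      using eq_Psi[OF eqM] by simp
    ultimately have d1: "((\<lambda>m'. (m', 0::real^'k)) has_derivative (Psid (m, Mc m) \<circ> (\<lambda>t. (t, t *\<^sub>R DD m)))) (at m)"
      using has_derivative_transform_within_open[of "Psi \<circ> (\<lambda>m'. (m', Mc m'))" _ m UNIV Ival "\<lambda>m'. (m', 0::real^'k)"] oI mI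
      by blast
    have d2: "((\<lambda>m'. (m', 0::real^'k)) has_derivative (\<lambda>t. (t, 0))) (at m)"
      by (intro derivative_eq_intros) auto
    have "(Psid (m, Mc m) \<circ> (\<lambda>t. (t, t *\<^sub>R DD m))) = (\<lambda>t. (t, 0))"
      by (rule has_derivative_unique[OF d1 d2])
    from fun_cong[OF this, of 1] show ?thesis by simp
  qed
  have Dcont: "continuous_on Ival DD"
  proof -
    have Tc: "continuous_on Ival (\<lambda>m. Psi' (m, Mc m))"
      by (rule continuous_on_compose2[OF Psi'_cont]) (auto intro!: continuous_intros Mcont MU)
    have "continuous_on Ival (\<lambda>m. (1::real, DD m))"
    proof (rule cont_solution[OF Tc _ continuous_on_const])
      fix s assume sI: "s \<in> Ival"
      have ap: "blinfun_apply (Psi' (s, Mc s)) = Psid (s, Mc s)" using Psi'_apply[of "(s, Mc s)"] MU[OF sI] by simp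
      have "Mlow N n e f < ereal s" using sI by (simp add: Ival_def)
      moreover have "Mc s \<in> Simplex N n e" using eqM[OF sI] by (simp add: eq_def)
      ultimately show "inj (blinfun_apply (Psi' (s, Mc s)))" unfolding ap by (rule Psid_inj)
      show "blinfun_apply (Psi' (s, Mc s)) (1, DD s) = (1, 0)" unfolding ap by (rule lineq[OF sI])
    qed
    then have "continuous_on Ival (\<lambda>m. snd (1::real, DD m))" by (rule continuous_on_snd)
    then show ?thesis by simp
  qed
  have C1: "Mc C1_differentiable_on Ival"
    unfolding C1_differentiable_on_def using DD Dcont by blast
  obtain K where K: "\<And>x. x \<in> Simplex N n e \<Longrightarrow> norm (P x) \<le> K" using P_bounded by blast
  have lim: "(Mc \<longlongrightarrow> c) at_top"
  proof -
    have ev: "eventually (\<lambda>m. norm (Mc m - c) \<le> K / m) at_top"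
      unfolding eventually_at_top_linorder
    proof (intro exI[of _ M] allI impI)
      fix m assume mM: "M \<le> m"
      then have mI: "m \<in> Ival" using M by (auto simp: Ival_def intro: less_le_trans)
      have mpos: "0 < m" using mI Ival_pos by (simp add: Ival_def)
      have "P (Mc m) = m *\<^sub>R (Mc m - c)" by (rule eq_P[OF eqM[OF mI]])
      then have "m * norm (Mc m - c) = norm (P (Mc m))" using mpos by simp
      also have "\<dots> \<le> K" using K eqM[OF mI] by (simp add: eq_def)
      finally show "norm (Mc m - c) \<le> K / m" using mpos by (simp add: field_simps)
    qed
    have "((\<lambda>m::real. K / m) \<longlongrightarrow> 0) at_top"
      by (rule tendsto_divide_0[OF tendsto_const filterlim_at_top_imp_at_infinity[OF filterlim_ident]])
    then have "((\<lambda>m. Mc m - c) \<longlongrightarrow> 0) at_top" using Lim_null_comparison[OF ev] by blast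
    then show ?thesis by (rule LIM_zero_cancel)
  qed
  have MM: "Mc M = xM" using uniq[OF MI xM] by simp
  show ?thesis
    by (rule exI[of _ Mc]) (use MM eqM Mcont uniq C1 lim in \<open>auto simp: Ival_def\<close>)
qed

end

theorem mainTheorem5:
  fixes N :: nat and n :: "nat \<Rightarrow> nat" and e :: "'k::finite \<Rightarrow> nat \<times> nat"
    and f :: "nat \<Rightarrow> nat \<Rightarrow> real^'k \<Rightarrow> real" and U :: "(real^'k) set"
    and c xM :: "real^'k" and M :: real
  assumes bij: "bij_betw e UNIV (Sidx N n)"
    and U: "open U" "Simplex N n e \<subseteq> U"
    and C1: "\<forall>(i,h)\<in>Sidx N n. C1_on (f i h) U"
    and indep: "\<forall>(i,h)\<in>Sidx N n. \<forall>k\<in>{1..n i}. \<forall>x\<in>U. partial_zero e (f i h) i k x"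
    and c: "c \<in> intSimplex N n e"
    and M: "ereal M > Mlow N n e f"
    and xM: "mut_eq N n e f c M xM"
  shows "\<exists>\<M> :: real \<Rightarrow> real^'k.
           \<M> M = xM \<and>
           (\<forall>m. ereal m > Mlow N n e f \<longrightarrow> mut_eq N n e f c m (\<M> m)) \<and>
           continuous_on {m. ereal m > Mlow N n e f} \<M> \<and>
           (\<forall>\<G> :: real \<Rightarrow> real^'k.
              continuous_on {m. ereal m > Mlow N n e f} \<G> \<and> \<G> M = xM \<and>
              (\<forall>m. ereal m > Mlow N n e f \<longrightarrow> mut_eq N n e f c m (\<G> m)) \<longrightarrow>
              (\<forall>m. ereal m > Mlow N n e f \<longrightarrow> \<G> m = \<M> m)) \<and>
           \<M> C1_differentiable_on {m. ereal m > Mlow N n e f} \<and>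
           (\<M> \<longlongrightarrow> c) at_top"
proof -
  interpret S: setting N n e f U c
    by (unfold_locales) (use bij U C1 c in auto)
  have xM': "S.eq M xM" using xM by (simp add: S.mut_eq_iff)
  obtain Mc where P1: "Mc M = xM" and P2: "\<forall>m. Mlow N n e f < ereal m \<longrightarrow> S.eq m (Mc m)"
    and P3: "continuous_on S.Ival Mc"
    and P4: "\<forall>G. (\<forall>m. Mlow N n e f < ereal m \<longrightarrow> S.eq m (G m)) \<longrightarrow> (\<forall>m. Mlow N n e f < ereal m \<longrightarrow> G m = Mc m)"
    and P5: "Mc C1_differentiable_on S.Ival" and P6: "(Mc \<longlongrightarrow> c) at_top"
    using S.main[OF M xM'] by blast
  show ?thesis
  proof (intro exI[of _ Mc] conjI allI impI)
    show "Mc M = xM" by (rule P1)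
    show "mut_eq N n e f c m (Mc m)" if "Mlow N n e f < ereal m" for m
      using P2 that by (simp add: S.mut_eq_iff)
    show "continuous_on {m. Mlow N n e f < ereal m} Mc" using P3 by (simp add: S.Ival_def)
    show "Mc C1_differentiable_on {m. Mlow N n e f < ereal m}" using P5 by (simp add: S.Ival_def)
    show "(Mc \<longlongrightarrow> c) at_top" by (rule P6)
    fix G :: "real \<Rightarrow> real^'k" and m
    assume G: "continuous_on {m. Mlow N n e f < ereal m} G \<and> G M = xM \<and>
              (\<forall>m. Mlow N n e f < ereal m \<longrightarrow> mut_eq N n e f c m (G m))"
      and m: "Mlow N n e f < ereal m"
    have "\<forall>m. Mlow N n e f < ereal m \<longrightarrow> S.eq m (G m)" using G by (simp add: S.mut_eq_iff)
    then show "G m = Mc m" using P4 m by blast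
  qed
qed

end
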